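(* There exists an absolute constant $\xi>0$ such that for every $\rho<\xi$, every sufficiently large $m$ and every sufficiently small $\epsilon$, the instance $G^{(\rho)}_{n,\ell}$ satisfies $k_u\ge n^{\Omega(1/\ell)}=n^{\Omega(\epsilon)}$ for every non-sink vertex $u$. Moreover, for $\ell=3$ (i.e. $\epsilon=1$), $k_u=n^{\Omega(1)}$ for every non-sink vertex $u$.
   Context: The instance $G^{(\rho)}_{n,\ell}$: integers $m$ and $1/\epsilon$ with $\epsilon\rho m\in\mathbb N$, $\ell=3/\epsilon$, and (standing assumption) $\epsilon m=\omega(\log m)$; ground set $[m]$. Each vertex $v$ has a label $S_v\subseteq[m]$: $L_0=\{s\}$ (the source) with $S_s=\emptyset$; for $1\le i<2/\epsilon$, $L_i$ has one vertex per subset of size $i\epsilon\rho m$; for $2/\epsilon\le i\le 3/\epsilon$, $L_i$ has one vertex per subset of size $(4-i\epsilon)\rho m$. For $u\in L_{i-1},v\in L_i$ there is an edge $(u,v)$ iff $S_u\subseteq S_v$ (if $i\le 2/\epsilon$) or $S_v\subseteq S_u$ (if $i>2/\epsilon$). Sinks: $L_{3/\epsilon}$. With $\delta^+_i$ the out-degree of vertices of $L_i$, the required out-degree is $k_v=\gamma_i\delta^+_i$ for $v\in L_i$, $i<\ell$, where $\gamma_i=\gamma'_1$ ($0\le i<1/\epsilon$), $\gamma'_2$ ($1/\epsilon\le i<2/\epsilon$), $\gamma'_3$ ($2/\epsilon\le i<3/\epsilon$), $\gamma'_1=\frac{(\epsilon\rho m)!}{((\rho m)!\binom{(1-\rho)m}{\rho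 m})^{\epsilon}}$, $\gamma'_2=\frac{(\epsilon\rho m)!}{((\rho m)!\binom{2\rho m}{\rho m})^{\epsilon}}$, $\gamma'_3=\frac{(\epsilon\rho m)!}{((\rho m)!)^{\epsilon}}$. $n$ is the number of vertices, $n=2^{\Theta(m)}$. *)

theory Defs
  imports Complex_Main
begin

text \<open>Parameters: t = 1/epsilon (positive integer), a = epsilon*rho*m
  (natural number), hence rho*m = t*a and l = 3t.\<close>

definition lsize :: "nat \<Rightarrow> nat \<Rightarrow> nat \<Rightarrow> nat" where
  "lsize t a i = (if i < 2 * t then i * a else (4 * t - i) * a)"

definition verts :: "nat \<Rightarrow> nat \<Rightarrow> nat \<Rightarrow> (nat \<times> nat set) set" where
  "verts t a m = {(i, S). i \<le> 3 * t \<and> S \<subseteq> {1..m} \<and> card S = lsize t a i}"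

definition edge :: "nat \<Rightarrow> nat \<times> nat set \<Rightarrow> nat \<times> nat set \<Rightarrow> bool" where
  "edge t u v = (fst v = fst u + 1 \<and>
     (if fst v \<le> 2 * t then snd u \<subseteq> snd v else snd v \<subseteq> snd u))"

definition outdeg :: "nat \<Rightarrow> nat \<Rightarrow> nat \<Rightarrow> nat \<times> nat set \<Rightarrow> nat" where
  "outdeg t a m u = card {v \<in> verts t a m. edge t u v}"

text \<open>gamma'_1, gamma'_2, gamma'_3, written with rho*m = t*a, (1-rho)m = m - t*a,
  2 rho m = 2*t*a, epsilon = 1/t.\<close>

definition gamma1 :: "nat \<Rightarrow> nat \<Rightarrow> nat \<Rightarrow> real" where
  "gamma1 t a m = fact a / (real (fact (t * a) * ((m - t * a) choose (t * a)))) powr (1 / real t)"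

definition gamma2 :: "nat \<Rightarrow> nat \<Rightarrow> real" where
  "gamma2 t a = fact a / (real (fact (t * a) * ((2 * t * a) choose (t * a)))) powr (1 / real t)"

definition gamma3 :: "nat \<Rightarrow> nat \<Rightarrow> real" where
  "gamma3 t a = fact a / (real (fact (t * a))) powr (1 / real t)"

definition gammaL :: "nat \<Rightarrow> nat \<Rightarrow> nat \<Rightarrow> nat \<Rightarrow> real" where
  "gammaL t a m i = (if i < t then gamma1 t a m else if i < 2 * t then gamma2 t a else gamma3 t a)"

definition kreq :: "nat \<Rightarrow> nat \<Rightarrow> nat \<Rightarrow> nat \<times> nat set \<Rightarrow> real" where
  "kreq t a m v = gammaL t a m (fst v) * real (outdeg t a m v)"

definition nverts :: "nat \<Rightarrow> nat \<Rightarrow> nat \<Rightarrow> nat" where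
  "nverts t a m = card (verts t a m)"

end

theory Submission
  imports Defs
begin

lemma ffact_prod: "fact k * (N choose k) = (\<Prod>j<k. N - j)"
proof (induction k arbitrary: N)
  case 0 then show ?case by simp
next
  case (Suc k)
  show ?case
  proof (cases N)
    case 0 then show ?thesis by (simp add: prod.lessThan_Suc_shift)
  next
    case (Suc n)
    have "fact (Suc k) * (Suc n choose Suc k) = fact k * (Suc k * (Suc n choose Suc k))"
      by (simp add: algebra_simps)
    also have "\<dots> = Suc n * (fact k * (n choose k))" by (simp only: Suc_times_binomial) (simp add: algebra_simps)
    also have "\<dots> = Suc n * (\<Prod>j<k. n - j)" using Suc.IH by simp
    also have "\<dots> = (\<Prod>j<Suc k. Suc n - j)" by (subst prod.lessThan_Suc_shift) simp
    finally show ?thesis using Suc by simp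
  qed
qed

lemma ffact_lower: "(M + 1 - a) ^ a \<le> fact a * (M choose a)"
proof -
  have "(\<Prod>j<a. M + 1 - a) \<le> (\<Prod>j<a. M - j)"
    by (rule prod_mono) auto
  then show ?thesis by (simp add: ffact_prod)
qed

lemma ffact_upper: "fact k * (N choose k) \<le> N ^ k"
proof -
  have "(\<Prod>j<k. N - j) \<le> (\<Prod>j<k. N)"
    by (rule prod_mono) auto
  then show ?thesis by (simp add: ffact_prod)
qed

lemma ffact_upper2:
  assumes "h \<le> k"
  shows "fact k * (N choose k) \<le> N ^ h * (N - h) ^ (k - h)"
proof -
  have "(\<Prod>j<k. N - j) = (\<Prod>j\<in>{0..<h}. N - j) * (\<Prod>j\<in>{h..<k}. N - j)"
    using prod.atLeastLessThan_concat[of 0 h k "\<lambda>j. N - j"] assms by (simp add: atLeast0LessThan)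
  also have "\<dots> \<le> (\<Prod>j\<in>{0..<h}. N) * (\<Prod>j\<in>{h..<k}. N - h)"
    by (intro mult_mono prod_mono) auto
  also have "\<dots> = N ^ h * (N - h) ^ (k - h)" by simp
  finally show ?thesis by (simp add: ffact_prod)
qed

lemma fact_pow: "2 ^ k * fact (Suc k) \<le> (real (Suc k)) ^ (Suc k)"
proof (induction k)
  case 0 then show ?case by simp
next
  case (Suc k)
  have b: "1 + real (Suc k) * (1 / real (Suc k)) \<le> (1 + 1 / real (Suc k)) ^ Suc k"
    by (rule Bernoulli_inequality) (simp add: order_trans[of _ 0])
  have e: "(1 + 1 / real (Suc k)) * real (Suc k) = real (Suc (Suc k))"
    by (simp add: field_simps)
  have "(1 + 1 / real (Suc k)) ^ Suc k * real (Suc k) ^ Suc k = real (Suc (Suc k)) ^ Suc k"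
    by (simp only: power_mult_distrib[symmetric] e)
  moreover have "2 \<le> (1 + 1 / real (Suc k)) ^ Suc k" using b by simp
  then have "2 * real (Suc k) ^ Suc k \<le> (1 + 1 / real (Suc k)) ^ Suc k * real (Suc k) ^ Suc k"
    by (intro mult_right_mono) auto
  ultimately have bb: "2 * real (Suc k) ^ Suc k \<le> real (Suc (Suc k)) ^ Suc k"
    by simp
  have "2 ^ Suc k * fact (Suc (Suc k)) = real (Suc (Suc k)) * (2 * (2 ^ k * fact (Suc k)))"
    by (simp add: algebra_simps)
  also have "\<dots> \<le> real (Suc (Suc k)) * (2 * real (Suc k) ^ Suc k)"
    using Suc.IH by (intro mult_left_mono) auto
  also have "\<dots> \<le> real (Suc (Suc k)) * real (Suc (Suc k)) ^ Suc k"
    using bb by (intro mult_left_mono) auto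
  finally show ?case by simp
qed

lemma root_bound:
  fixes X Y Z :: real
  assumes "t \<ge> 1" "X > 0" "Z > 0" "Y \<ge> 0" "Z * X \<le> Y ^ t"
  shows "Z powr (1 / real t) \<le> Y / X powr (1 / real t)"
proof -
  have "Y \<noteq> 0"
  proof
    assume "Y = 0"
    then have "Y ^ t = 0" using assms(1) by simp
    moreover have "Z * X > 0" using assms by simp
    ultimately show False using assms(5) by linarith
  qed
  then have "Y > 0" using assms(4) by simp
  have "(Z * X) powr (1 / real t) \<le> (Y ^ t) powr (1 / real t)"
    using assms by (intro powr_mono2) auto
  also have "(Y ^ t) powr (1 / real t) = Y"
    using \<open>Y > 0\<close> assms(1) by (simp add: powr_realpow[symmetric] powr_powr)
  finally have "Z powr (1 / real t) * X powr (1 / real t) \<le> Y"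
    using assms by (simp add: powr_mult)
  then show ?thesis using assms by (simp add: pos_le_divide_eq)
qed


lemma verts_sub: "verts t a m \<subseteq> {..3*t} \<times> Pow {1..m}"
  by (auto simp: verts_def)

lemma finite_verts: "finite (verts t a m)"
  by (rule finite_subset[OF verts_sub]) auto

lemma nverts_le: "nverts t a m \<le> (3*t+1) * 2 ^ m"
proof -
  have "nverts t a m \<le> card ({..3*t} \<times> Pow {1..m})"
    unfolding nverts_def by (rule card_mono[OF _ verts_sub]) auto
  also have "\<dots> = (3*t+1) * 2 ^ m" by (simp add: card_cartesian_product card_Pow)
  finally show ?thesis .
qed

lemma outdeg_up:
  assumes "(i, S) \<in> verts t a m" "i < 2 * t"
  shows "(m - i * a) choose a \<le> outdeg t a m (i, S)"
proof -
  have S: "S \<subseteq> {1..m}" "card S = i * a" using assms by (auto simp: verts_def lsize_def)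
  have fS: "finite S" using S(1) finite_subset by blast
  define F where "F = {T. T \<subseteq> {1..m} - S \<and> card T = a}"
  have cF: "card F = (m - i * a) choose a"
    unfolding F_def using n_subsets[of "{1..m} - S" a] S fS by (simp add: card_Diff_subset)
  define g where "g T = (i + 1, S \<union> T)" for T
  have inj: "inj_on g F"
  proof (rule inj_onI)
    fix T1 T2 assume "T1 \<in> F" "T2 \<in> F" "g T1 = g T2"
    then have "S \<union> T1 = S \<union> T2" "T1 \<inter> S = {}" "T2 \<inter> S = {}" by (auto simp: g_def F_def)
    then show "T1 = T2" by blast
  qed
  have img: "g ` F \<subseteq> {v \<in> verts t a m. edge t (i, S) v}"
  proof
    fix v assume "v \<in> g ` F"
    then obtain T where T: "T \<subseteq> {1..m} - S" "card T = a" and v: "v = (i+1, S \<union> T)"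
      by (auto simp: g_def F_def)
    have fT: "finite T" using T(1) finite_subset by (metis finite_Diff finite_atLeastAtMost)
    have "card (S \<union> T) = i * a + a" using card_Un_disjoint[OF fS fT] T S by auto
    moreover have "lsize t a (i+1) = i * a + a"
    proof (cases "i + 1 < 2 * t")
      case True then show ?thesis by (simp add: lsize_def algebra_simps)
    next
      case False
      then have "i + 1 = 2 * t" using assms(2) by simp
      then have "4 * t - (i+1) = i + 1" by simp
      then show ?thesis using False by (simp add: lsize_def algebra_simps)
    qed
    ultimately show "v \<in> {v \<in> verts t a m. edge t (i, S) v}"
      using v T S assms(2) by (auto simp: verts_def edge_def)
  qed
  have "card F \<le> card {v \<in> verts t a m. edge t (i, S) v}"
    by (rule card_inj_on_le[OF inj img]) (simp add: finite_verts)
  then show ?thesis using cF by (simp add: outdeg_def)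
qed

lemma outdeg_down:
  assumes "(i, S) \<in> verts t a m" "2 * t \<le> i" "i < 3 * t"
  shows "((4 * t - i) * a) choose a \<le> outdeg t a m (i, S)"
proof -
  have S: "S \<subseteq> {1..m}" "card S = (4 * t - i) * a" using assms by (auto simp: verts_def lsize_def)
  have fS: "finite S" using S(1) finite_subset by blast
  have eq: "(4 * t - i) * a = (4 * t - (i+1)) * a + a"
    using assms by (simp add: algebra_simps Suc_diff_Suc[symmetric] flip: diff_mult_distrib)
  define F where "F = {T. T \<subseteq> S \<and> card T = (4 * t - (i+1)) * a}"
  have cF: "card F = ((4 * t - i) * a) choose a"
    unfolding F_def using n_subsets[of S] S fS eq binomial_symmetric[of a "(4 * t - i) * a"]
    by simp
  define g where "g T = (i + 1, T)" for T :: "nat set"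
  have inj: "inj_on g F" by (auto simp: inj_on_def g_def)
  have img: "g ` F \<subseteq> {v \<in> verts t a m. edge t (i, S) v}"
    using assms S by (auto simp: g_def F_def verts_def edge_def lsize_def)
  have "card F \<le> card {v \<in> verts t a m. edge t (i, S) v}"
    by (rule card_inj_on_le[OF inj img]) (simp add: finite_verts)
  then show ?thesis using cF by (simp add: outdeg_def)
qed


lemma core:
  fixes \<rho> :: real
  assumes rho: "0 < \<rho>" "\<rho> \<le> 1/6" and t: "t \<ge> 1" and ta: "real (t*a) = \<rho> * real m"
    and k2: "t*a \<ge> 2" and v: "v \<in> verts t a m" "fst v < 3*t"
  shows "(1 + \<rho>/4) powr (real a / 2) \<le> kreq t a m v"
proof -
  define k where "k = t*a"
  define b where "b = 1 + \<rho>/4"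
  obtain i S where vi: "v = (i,S)" by (cases v)
  have vin: "(i,S) \<in> verts t a m" and i3: "i < 3*t" using v vi by auto
  have "6 * (\<rho> * real m) \<le> 1 * real m" using mult_right_mono[of "6*\<rho>" 1 "real m"] rho by simp
  then have "real (6*k) \<le> real m" using ta unfolding k_def by simp
  then have m6: "6*k \<le> m" by linarith
  have a1: "a \<ge> 1" using k2 by (cases a) auto
  have k2': "k \<ge> 2" using k2 k_def by simp
  have b1: "1 \<le> b" "b \<le> 2" "0 < b" using rho by (auto simp: b_def)
  define Y where "Y = fact a * real (outdeg t a m (i,S))"
  have Y0: "Y \<ge> 0" by (simp add: Y_def)
  have kr: "kreq t a m v = gammaL t a m i * real (outdeg t a m (i,S))"
    by (simp add: kreq_def vi)
  have fin: "b powr (real a / 2) \<le> fact a / X powr (1 / real t) * real (outdeg t a m (i,S))"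
    if X0: "X > 0" and XY: "b powr (real k / 2) * X \<le> Y ^ t" for X :: real
  proof -
    have "(b powr (real k / 2)) powr (1 / real t) \<le> Y / X powr (1 / real t)"
      by (rule root_bound[OF t X0 _ Y0 XY]) (use b1 in simp)
    moreover have e: "real k / 2 * (1 / real t) = real a / 2" using t by (simp add: k_def field_simps)
    have "(b powr (real k / 2)) powr (1 / real t) = b powr (real a / 2)" by (simp only: powr_powr e)
    ultimately show ?thesis by (simp add: Y_def)
  qed
  have Ylow: "real B ^ a \<le> Y" if "M choose a \<le> outdeg t a m (i,S)" "B \<le> M + 1 - a" for M B
  proof -
    have "B ^ a \<le> (M + 1 - a) ^ a" using that(2) by (rule power_mono) simp
    also have "\<dots> \<le> fact a * (M choose a)" by (rule ffact_lower)
    also have "\<dots> \<le> fact a * outdeg t a m (i,S)" using that(1) by simp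
    finally have "real (B ^ a) \<le> real (fact a * outdeg t a m (i,S))" by (simp only: of_nat_le_iff)
    then show ?thesis by (simp add: Y_def)
  qed
  have Ypow: "real B ^ k \<le> Y ^ t" if "real B ^ a \<le> Y" for B
  proof -
    have "real B ^ k = (real B ^ a) ^ t" by (simp add: k_def power_mult[symmetric] mult.commute)
    also have "\<dots> \<le> Y ^ t" using that by (intro power_mono) auto
    finally show ?thesis .
  qed
  consider (A) "i < t" | (B) "t \<le> i" "i < 2*t" | (C) "2*t \<le> i" by linarith
  then show ?thesis
  proof cases
    case A
    define N where "N = m - k"
    define h where "h = k div 2"
    define X where "X = real (fact k * (N choose k))"
    have g: "gammaL t a m i = fact a / X powr (1 / real t)"
      using A by (simp add: gammaL_def gamma1_def X_def N_def k_def)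
    have ia: "i * a + a \<le> k" using mult_le_mono1[of "i+1" t a] A by (simp add: k_def)
    have "real N ^ a \<le> Y"
      by (rule Ylow[OF outdeg_up[OF vin]]) (use A ia in \<open>auto simp: N_def\<close>)
    then have YN: "real N ^ k \<le> Y ^ t" by (rule Ypow)
    have X0: "X > 0" using m6 by (simp add: X_def N_def)
    have hk: "h \<le> k" by (simp add: h_def)
    have XN: "X \<le> real N ^ h * real (N - h) ^ (k - h)"
      using ffact_upper2[OF hk, of N] unfolding X_def by (simp only: of_nat_le_iff flip: of_nat_power of_nat_mult)
    have hN: "h \<le> N" using m6 by (simp add: h_def N_def)
    have "real k \<le> 4 * real h" using k2' by (simp add: h_def)
    moreover have "\<rho> * real N \<le> real k"
      using ta rho m6 by (simp add: N_def k_def of_nat_diff algebra_simps)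
    ultimately have "\<rho> * real N \<le> 4 * real h" by linarith
    moreover have "\<rho> * real h \<ge> 0" using rho by simp
    moreover have eqNh: "real (N - h) = real N - real h" using hN by (simp add: of_nat_diff)
    moreover have "b * (real N - real h) = real N - real h + \<rho> * real N / 4 - \<rho> * real h / 4"
      by (simp add: b_def field_simps)
    ultimately have "b * (real N - real h) \<le> real N" by linarith
    then have bN: "b * real (N - h) \<le> real N" unfolding eqNh .
    have "b ^ (k - h) * X \<le> b ^ (k - h) * (real N ^ h * real (N - h) ^ (k - h))"
      by (rule mult_left_mono[OF XN]) (use b1 in simp)
    also have "\<dots> = real N ^ h * (b * real (N - h)) ^ (k - h)" by (simp add: power_mult_distrib)
    also have "\<dots> \<le> real N ^ h * real N ^ (k - h)"
    proof -
      have "(b * real (N - h)) ^ (k - h) \<le> real N ^ (k - h)"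
        by (rule power_mono[OF bN]) (use b1 in simp)
      then show ?thesis by (rule mult_left_mono) simp
    qed
    also have "\<dots> = real N ^ k" using hk by (simp flip: power_add)
    finally have 1: "b ^ (k - h) * X \<le> real N ^ k" .
    have "k \<le> 2 * (k - h)" unfolding h_def by presburger
    then have "real k \<le> real (2 * (k - h))" by (simp only: of_nat_le_iff)
    then have "real k / 2 \<le> real (k - h)" by simp
    then have "b powr (real k / 2) \<le> b powr (real (k - h))"
      using b1 by (intro powr_mono) auto
    then have "b powr (real k / 2) \<le> b ^ (k - h)" using b1 by (simp add: powr_realpow)
    then have "b powr (real k / 2) * X \<le> b ^ (k - h) * X" using X0 by (intro mult_right_mono) auto
    with 1 YN have "b powr (real k / 2) * X \<le> Y ^ t" by linarith
    from fin[OF X0 this] show ?thesis using kr g by (simp add: b_def)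
  next
    case B
    define X where "X = real (fact k * ((2*k) choose k))"
    have g: "gammaL t a m i = fact a / X powr (1 / real t)"
      using B by (simp add: gammaL_def gamma2_def X_def k_def mult.assoc)
    have ia: "i * a + a \<le> 2 * k" using mult_le_mono1[of "i+1" "2*t" a] B by (simp add: k_def)
    have "real (4*k) ^ a \<le> Y"
      by (rule Ylow[OF outdeg_up[OF vin]]) (use B ia m6 in auto)
    then have YN: "real (4*k) ^ k \<le> Y ^ t" by (rule Ypow)
    have X0: "X > 0" by (simp add: X_def)
    have XN: "X \<le> real (2*k) ^ k"
      using ffact_upper[of k "2*k"] unfolding X_def by (simp only: of_nat_le_iff flip: of_nat_power of_nat_mult)
    have "b powr (real k / 2) \<le> 2 powr (real k / 2)" using b1 by (intro powr_mono2) auto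
    also have "\<dots> \<le> 2 powr (real k)" by (intro powr_mono) auto
    also have "\<dots> = 2 ^ k" by (simp add: powr_realpow)
    finally have Z: "b powr (real k / 2) \<le> 2 ^ k" .
    have "b powr (real k / 2) * X \<le> 2 ^ k * real (2*k) ^ k"
      using Z XN X0 by (intro mult_mono) auto
    also have "\<dots> = (2 * real (2*k)) ^ k" by (rule power_mult_distrib[symmetric])
    also have "\<dots> = real (4*k) ^ k" by simp
    finally have "b powr (real k / 2) * X \<le> Y ^ t" using YN by linarith
    from fin[OF X0 this] show ?thesis using kr g by (simp add: b_def)
  next
    case C
    define X where "X = real (fact k)"
    have g: "gammaL t a m i = fact a / X powr (1 / real t)"
      using C by (simp add: gammaL_def gamma3_def X_def k_def)
    have "(t + 1) * a \<le> (4 * t - i) * a" using C i3 by (intro mult_le_mono1) simp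
    then have ia: "k + a \<le> (4 * t - i) * a" by (simp add: k_def algebra_simps)
    have "real k ^ a \<le> Y"
      by (rule Ylow[OF outdeg_down[OF vin C i3]]) (use ia in auto)
    then have YN: "real k ^ k \<le> Y ^ t" by (rule Ypow)
    have X0: "X > 0" by (simp add: X_def)
    have "b powr (real k / 2) \<le> 2 powr (real k / 2)" using b1 by (intro powr_mono2) auto
    also have "\<dots> \<le> 2 powr (real (k - 1))" using k2' by (intro powr_mono) (auto simp: of_nat_diff)
    also have "\<dots> = 2 ^ (k - 1)" by (simp add: powr_realpow)
    finally have Z: "b powr (real k / 2) \<le> 2 ^ (k - 1)" .
    have kS: "Suc (k - 1) = k" using k2' by simp
    have F: "2 ^ (k - 1) * X \<le> real k ^ k" using fact_pow[of "k - 1"] unfolding kS X_def by simp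
    have "b powr (real k / 2) * X \<le> 2 ^ (k - 1) * X" using Z X0 by (intro mult_right_mono) auto
    with F YN have "b powr (real k / 2) * X \<le> Y ^ t" by linarith
    from fin[OF X0 this] show ?thesis using kr g by (simp add: b_def)
  qed
qed


lemma pow4: "3 * m + 1 \<le> (4::nat) ^ m"
  by (induction m) auto

lemma main_bound:
  fixes \<rho> :: real
  assumes rho: "0 < \<rho>" "\<rho> \<le> 1/6" and t: "t \<ge> 1" and m: "m \<ge> nat \<lceil>2/\<rho>\<rceil> + 1"
    and ta: "real (t*a) = \<rho> * real m"
    and v: "v \<in> verts t a m" "fst v < 3*t"
  shows "real (nverts t a m) powr ((\<rho> * ln (1 + \<rho>/4) / (2 * ln 8)) / real t) \<le> kreq t a m v"
proof -
  define b where "b = 1 + \<rho>/4"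
  define c where "c = \<rho> * ln b / (2 * ln 8)"
  have b1: "b > 1" using rho by (simp add: b_def)
  have c0: "c \<ge> 0" using b1 rho by (simp add: c_def)
  have "real m \<ge> 2/\<rho> + 1" using m by linarith
  then have "\<rho> * real m \<ge> \<rho> * (2/\<rho> + 1)" using rho by (intro mult_left_mono) auto
  moreover have "\<rho> * (2/\<rho> + 1) = 2 + \<rho>" using rho by (simp add: field_simps)
  ultimately have "\<rho> * real m \<ge> 2 + \<rho>" by linarith
  then have "real (t*a) \<ge> 2" using ta rho by linarith
  then have k2: "t * a \<ge> 2" by linarith
  have K: "b powr (real a / 2) \<le> kreq t a m v"
    using core[OF rho t ta k2 v] by (simp add: b_def)
  have a1: "a \<ge> 1" using k2 by (cases a) auto
  have "t \<le> t * a" using a1 by simp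
  then have "real t \<le> real (t*a)" by (simp only: of_nat_le_iff)
  moreover have "\<rho> * real m \<le> 1 * real m" using rho by (intro mult_right_mono) auto
  ultimately have "real t \<le> real m" using ta by linarith
  then have tm: "t \<le> m" by simp
  have "nverts t a m \<le> (3*t+1) * 2 ^ m" by (rule nverts_le)
  also have "\<dots> \<le> 4 ^ m * 2 ^ m" using pow4[of m] tm by (intro mult_right_mono) auto
  also have "\<dots> = 8 ^ m" by (simp flip: power_mult_distrib)
  finally have "real (nverts t a m) \<le> real (8 ^ m)" by (simp only: of_nat_le_iff)
  then have "real (nverts t a m) powr (c / real t) \<le> (8 ^ m) powr (c / real t)"
    using c0 by (intro powr_mono2) auto
  also have "(8 ^ m) powr (c / real t) = exp (c / real t * (real m * ln 8))"
    by (simp add: powr_def ln_realpow)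
  also have "c / real t * (real m * ln 8) = real a / 2 * ln b"
  proof -
    have "real a = \<rho> * real m / real t" using ta t by (simp add: field_simps)
    then show ?thesis using t by (simp add: c_def field_simps)
  qed
  also have "exp (real a / 2 * ln b) = b powr (real a / 2)"
    using b1 by (simp add: powr_def)
  finally show ?thesis using K by (simp add: c_def b_def)
qed

theorem lemma7:
  shows "\<exists>\<xi>::real. \<xi> > 0 \<and>
    (\<forall>\<rho>::real. 0 < \<rho> \<and> \<rho> < \<xi> \<longrightarrow>
       (\<exists>c::real. c > 0 \<and> (\<exists>\<epsilon>0::real. \<epsilon>0 > 0 \<and> (\<exists>K::real. \<exists>M::nat.
          \<forall>t m a :: nat. t \<ge> 1 \<and> 1 / real t \<le> \<epsilon>0 \<and> m \<ge> M \<and>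
             real m / real t \<ge> K * ln (real m) \<and> real (t * a) = \<rho> * real m \<longrightarrow>
             (\<forall>v \<in> verts t a m. fst v < 3 * t \<longrightarrow>
                kreq t a m v \<ge> real (nverts t a m) powr (c / real t)))))) \<and>
    (\<forall>\<rho>::real. 0 < \<rho> \<and> \<rho> < \<xi> \<longrightarrow>
       (\<exists>c::real. c > 0 \<and> (\<exists>M::nat.
          \<forall>m a :: nat. m \<ge> M \<and> real a = \<rho> * real m \<longrightarrow>
             (\<forall>v \<in> verts 1 a m. fst v < 3 \<longrightarrow>
                kreq 1 a m v \<ge> real (nverts 1 a m) powr c))))"
proof -
  have P1: "\<forall>\<rho>::real. 0 < \<rho> \<and> \<rho> < 1/6 \<longrightarrow>
       (\<exists>c::real. c > 0 \<and> (\<exists>\<epsilon>0::real. \<epsilon>0 > 0 \<and> (\<exists>K::real. \<exists>M::nat.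
          \<forall>t m a :: nat. t \<ge> 1 \<and> 1 / real t \<le> \<epsilon>0 \<and> m \<ge> M \<and>
             real m / real t \<ge> K * ln (real m) \<and> real (t * a) = \<rho> * real m \<longrightarrow>
             (\<forall>v \<in> verts t a m. fst v < 3 * t \<longrightarrow>
                kreq t a m v \<ge> real (nverts t a m) powr (c / real t)))))"
  proof (rule allI, rule impI)
  fix \<rho> :: real assume r: "0 < \<rho> \<and> \<rho> < 1/6"
  define c where "c = \<rho> * ln (1 + \<rho>/4) / (2 * ln 8)"
  have c0: "c > 0" using r by (simp add: c_def)
  show "\<exists>c::real. c > 0 \<and> (\<exists>\<epsilon>0::real. \<epsilon>0 > 0 \<and> (\<exists>K::real. \<exists>M::nat.
          \<forall>t m a :: nat. t \<ge> 1 \<and> 1 / real t \<le> \<epsilon>0 \<and> m \<ge> M \<and>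
             real m / real t \<ge> K * ln (real m) \<and> real (t * a) = \<rho> * real m \<longrightarrow>
             (\<forall>v \<in> verts t a m. fst v < 3 * t \<longrightarrow>
                kreq t a m v \<ge> real (nverts t a m) powr (c / real t))))"
  proof (rule exI[of _ c], rule conjI[OF c0], rule exI[of _ "1::real"], rule conjI[OF zero_less_one],
      rule exI[of _ "0::real"], rule exI[of _ "nat \<lceil>2/\<rho>\<rceil> + 1"], intro allI impI ballI)
    fix t m a :: nat and v
    assume h: "t \<ge> 1 \<and> 1 / real t \<le> 1 \<and> m \<ge> nat \<lceil>2/\<rho>\<rceil> + 1 \<and>
             real m / real t \<ge> 0 * ln (real m) \<and> real (t * a) = \<rho> * real m"
      and v: "v \<in> verts t a m" "fst v < 3 * t"
    show "kreq t a m v \<ge> real (nverts t a m) powr (c / real t)"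
      using main_bound[of \<rho> t m a v] r h v unfolding c_def by auto
  qed
  qed
  have P2: "\<forall>\<rho>::real. 0 < \<rho> \<and> \<rho> < 1/6 \<longrightarrow>
       (\<exists>c::real. c > 0 \<and> (\<exists>M::nat.
          \<forall>m a :: nat. m \<ge> M \<and> real a = \<rho> * real m \<longrightarrow>
             (\<forall>v \<in> verts 1 a m. fst v < 3 \<longrightarrow>
                kreq 1 a m v \<ge> real (nverts 1 a m) powr c)))"
  proof (rule allI, rule impI)
  fix \<rho> :: real assume r: "0 < \<rho> \<and> \<rho> < 1/6"
  define c where "c = \<rho> * ln (1 + \<rho>/4) / (2 * ln 8)"
  have c0: "c > 0" using r by (simp add: c_def)
  show "\<exists>c::real. c > 0 \<and> (\<exists>M::nat.
          \<forall>m a :: nat. m \<ge> M \<and> real a = \<rho> * real m \<longrightarrow>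
             (\<forall>v \<in> verts 1 a m. fst v < 3 \<longrightarrow>
                kreq 1 a m v \<ge> real (nverts 1 a m) powr c))"
  proof (intro exI[of _ c] conjI[OF c0] exI[of _ "nat \<lceil>2/\<rho>\<rceil> + 1"] allI impI ballI)
    fix m a :: nat and v
    assume h: "m \<ge> nat \<lceil>2/\<rho>\<rceil> + 1 \<and> real a = \<rho> * real m"
      and v: "v \<in> verts 1 a m" "fst v < 3"
    show "kreq 1 a m v \<ge> real (nverts 1 a m) powr c"
      using main_bound[of \<rho> 1 m a v] r h v unfolding c_def by auto
  qed
  qed
  show ?thesis
    by (rule exI[of _ "1/6"], intro conjI, simp, rule P1, rule P2)
qed

end
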